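(* For any formal series $\hat\psi(\hbar^2,y)$, $\hat y(\hbar^2,z)$ with $\hat\psi(\hbar^2,0)=\hat y(\hbar^2,0)=0$, and all $g\ge0$, $n\ge1$, $$2!\,[\hbar^{2g-2+n}u^2]\,\mathcal{T}_n(z_1;z_2,\dots,z_n;u)=W_{g-1,n+1}(z_1,z_1,z_2,\dots,z_n)+\sum_{\substack{g_1+g_2=g\\ I\sqcup J=\{2,\dots,n\}}}W_{g_1,|I|+1}(z_1,z_I)W_{g_2,|J|+1}(z_1,z_J),$$ where a factor $W_{0,2}$ with two equal arguments is replaced by $D_1D_2H_{0,2}$ on the diagonal.
   Context: $Z_{\hat\psi,\hat y}=\sum_\lambda s_\lambda(p)s_\lambda(\hat y_1/\hbar,\hat y_2/\hbar,\dots)\exp(\sum_{(i,j)\in\lambda}\hat\psi(\hbar^2,\hbar(i-j)))$, $\hat y=\sum\hat y_iz^i$, Schur functions in power sums; $H_{g,n}=\sum_{k_i\ge1}([\hbar^{2g-2+n}]\partial^n\log Z/\partial p_{k_1}\cdots\partial p_{k_n}|_{p=0})\prod X_i^{k_i}$; $\psi=\hat\psi(0,\cdot)$, $y=\hat y(0,\cdot)$, $X(z)=ze^{-\psi(y(z))}$ (formal change of variables at $0$), $Q=1-zy'\psi'(y)$, $D_i=X_i\partial_{X_i}=Q(z_i)^{-1}z_i\partial_{z_i}$; $W_{g,n}=D_1\cdots D_nH_{g,n}$ for $(g,n)\ne(0,2)$, $W_{0,2}=D_1D_2H_{0,2}+X_1X_2/(X_1-X_2)^2$, $W$ with negative genus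 is $0$; $W_n=\sum_g\hbar^{2g-2+n}W_{g,n}$; $\mathcal{S}(u)=(e^{u/2}-e^{-u/2})/u$. $T_n(z_1;z_2,\dots,z_n;u)=\sum_{k\ge1}\frac1{k!}\big(\prod_{i=1}^k|_{z_{\bar i}=z_1}u\hbar\mathcal{S}(u\hbar D_{\bar i})\big)W_{k+n-1}(z_{\bar1},\dots,z_{\bar k},z_2,\dots,z_n)$ (operators applied in auxiliary variables $z_{\bar i}$, then $z_{\bar i}=z_1$; any $W_{0,2}$ factor with two barred arguments is replaced by $DDH_{0,2}$), and $\mathcal{T}_n=\frac{\mathcal{S}(u\hbar D_1)}{\hbar\mathcal{S}(u\hbar)}\sum_{l\ge1}\frac1{l!}\sum_{J_1\sqcup\dots\sqcup J_l=\{2,\dots,n\}}\prod_{i=1}^lT_{|J_i|+1}(z_1;z_{J_i};u)$ (ordered decompositions, parts possibly empty). *)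

theory Defs
  imports "HOL-Library.Poly_Mapping" "HOL-Computational_Algebra.Formal_Laurent_Series"
          "HOL-Combinatorics.Permutations"
begin

definition is_partition :: "nat list \<Rightarrow> bool" where
  "is_partition lam \<longleftrightarrow> sorted_wrt (\<ge>) lam \<and> (\<forall>x\<in>set lam. 0 < x)"

definition partitions_of :: "nat \<Rightarrow> nat list set" where
  "partitions_of d = {lam. is_partition lam \<and> sum_list lam = d}"

definition zee :: "nat list \<Rightarrow> nat" where
  "zee mu = (\<Prod>k\<in>set mu. k ^ count_list mu k * fact (count_list mu k))"

text \<open>Polynomials in the power sums p_1, p_2, ...: a monomial is a finitely supported
  exponent map nat =>0 nat.\<close>
type_synonym 'a ppoly = "(nat \<Rightarrow>\<^sub>0 nat) \<Rightarrow>\<^sub>0 'a"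

definition pvar :: "nat \<Rightarrow> 'a::comm_ring_1 ppoly" where
  "pvar k = Poly_Mapping.single (Poly_Mapping.single k 1) 1"

definition p_mu :: "nat list \<Rightarrow> 'a::comm_ring_1 ppoly" where
  "p_mu mu = prod_list (map pvar mu)"

text \<open>Complete homogeneous symmetric function h_d = sum_{mu |- d} p_mu / z_mu (0 for d < 0).\<close>
definition hcompl :: "int \<Rightarrow> 'a::field_char_0 ppoly" where
  "hcompl d = (if d < 0 then 0 else
     (\<Sum>mu\<in>partitions_of (nat d). Poly_Mapping.single 0 (1 / of_nat (zee mu)) * p_mu mu))"

text \<open>Schur function in power sums via Jacobi--Trudi: s_lam = det (h_{lam_i - i + j}).\<close>
definition schur :: "nat list \<Rightarrow> 'a::field_char_0 ppoly" where
  "schur lam = (\<Sum>\<sigma> | \<sigma> permutes {..<length lam}.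
      of_int (sign \<sigma>) * (\<Prod>i<length lam. hcompl (int (lam ! i) - int i + int (\<sigma> i))))"

definition peval :: "(nat \<Rightarrow> 'a::field_char_0 fls) \<Rightarrow> 'a ppoly \<Rightarrow> 'a fls" where
  "peval q (P::'a ppoly) = (\<Sum>m\<in>Poly_Mapping.keys P. fls_const (Poly_Mapping.lookup P m) * (\<Prod>k\<in>Poly_Mapping.keys m. q k ^ Poly_Mapping.lookup m k))"

text \<open>Input data: psihat a m = coefficient of (hbar^2)^a y^m in psihat(hbar^2,y);
  yhat a i = coefficient of (hbar^2)^a z^i in yhat(hbar^2,z).\<close>

text \<open>yhat_i / hbar as a Laurent series in hbar.\<close>
definition yq :: "(nat \<Rightarrow> nat \<Rightarrow> 'a::field_char_0) \<Rightarrow> nat \<Rightarrow> 'a fls" where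
  "yq yhat i = fls_shift 1 (fps_to_fls (Abs_fps (\<lambda>N. if even N then yhat (N div 2) i else 0)))"

text \<open>Cells (i,j) of lam: row i, column j, 1-based.\<close>
definition cells :: "nat list \<Rightarrow> (nat \<times> nat) set" where
  "cells lam = {(i,j). 1 \<le> i \<and> i \<le> length lam \<and> 1 \<le> j \<and> j \<le> lam ! (i - 1)}"

text \<open>sum_{(i,j) in lam} psihat(hbar^2, hbar(i-j)) as a power series in hbar.\<close>
definition contsum :: "(nat \<Rightarrow> nat \<Rightarrow> 'a::field_char_0) \<Rightarrow> nat list \<Rightarrow> 'a fps" where
  "contsum psihat lam = Abs_fps (\<lambda>N. \<Sum>c\<in>cells lam. \<Sum>a\<le>N div 2.
       psihat a (N - 2 * a) * (of_int (int (fst c) - int (snd c))) ^ (N - 2 * a))"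

definition expfac :: "(nat \<Rightarrow> nat \<Rightarrow> 'a::field_char_0) \<Rightarrow> nat list \<Rightarrow> 'a fls" where
  "expfac psihat lam = fps_to_fls (fps_exp 1 oo contsum psihat lam)"

text \<open>Z as a formal series in the p's: coefficient of the p-monomial m (a Laurent series in hbar).\<close>
definition Zc :: "(nat \<Rightarrow> nat \<Rightarrow> 'a::field_char_0) \<Rightarrow> (nat \<Rightarrow> nat \<Rightarrow> 'a) \<Rightarrow> (nat \<Rightarrow>\<^sub>0 nat) \<Rightarrow> 'a fls" where
  "Zc psihat yhat m = (\<Sum>lam\<in>{lam. is_partition lam \<and> Poly_Mapping.lookup (schur lam :: 'a ppoly) m \<noteq> 0}.
      fls_const (Poly_Mapping.lookup (schur lam) m) * peval (yq yhat) (schur lam) * expfac psihat lam)"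

definition pconv :: "((nat \<Rightarrow>\<^sub>0 nat) \<Rightarrow> 'a::comm_ring_1) \<Rightarrow> ((nat \<Rightarrow>\<^sub>0 nat) \<Rightarrow> 'a) \<Rightarrow> (nat \<Rightarrow>\<^sub>0 nat) \<Rightarrow> 'a" where
  "pconv F G m = (\<Sum>ab\<in>{(a,b). a + b = m}. F (fst ab) * G (snd ab))"

fun ppw :: "((nat \<Rightarrow>\<^sub>0 nat) \<Rightarrow> 'a::comm_ring_1) \<Rightarrow> nat \<Rightarrow> (nat \<Rightarrow>\<^sub>0 nat) \<Rightarrow> 'a" where
  "ppw F 0 = (\<lambda>m. if m = 0 then 1 else 0)"
| "ppw F (Suc j) = pconv F (ppw F j)"

definition logZ :: "(nat \<Rightarrow> nat \<Rightarrow> 'a::field_char_0) \<Rightarrow> (nat \<Rightarrow> nat \<Rightarrow> 'a) \<Rightarrow> (nat \<Rightarrow>\<^sub>0 nat) \<Rightarrow> 'a fls" where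
  "logZ psihat yhat m =
     (let Zm1 = (\<lambda>m. Zc psihat yhat m - (if m = 0 then 1 else 0)) in
      \<Sum>j\<in>{j. 1 \<le> j \<and> ppw Zm1 j m \<noteq> 0}. fls_const ((-1) ^ (j + 1) / of_nat j) * ppw Zm1 j m)"

definition pmon :: "nat list \<Rightarrow> (nat \<Rightarrow>\<^sub>0 nat)" where
  "pmon ks = sum_list (map (\<lambda>k. Poly_Mapping.single k 1) ks)"

text \<open>Hc g ks = [hbar^(2g-2+n)] d^n log Z / dp_{k_1}...dp_{k_n} at p=0 (n = length ks),
  i.e. the coefficient of X_1^{k_1}...X_n^{k_n} in H_{g,n}.\<close>
definition Hc :: "(nat \<Rightarrow> nat \<Rightarrow> 'a::field_char_0) \<Rightarrow> (nat \<Rightarrow> nat \<Rightarrow> 'a) \<Rightarrow> nat \<Rightarrow> nat list \<Rightarrow> 'a" where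
  "Hc psihat yhat g ks =
     fls_nth (logZ psihat yhat (pmon ks)) (2 * int g - 2 + int (length ks)) *
     (\<Prod>k\<in>Poly_Mapping.keys (pmon ks). fact (Poly_Mapping.lookup (pmon ks) k))"

text \<open>Coefficient of prod_i X_i^{a_i} in W_{g,n}(X_1,...,X_n), n = length a
  (all k_i >= 1 for the regular part, D_i multiplies by a_i). For (g,n)=(0,2) and sing = True
  the term X_1X_2/(X_1-X_2)^2 is added, expanded in the region |X_1| < |X_2|
  (first argument small): sum_{m>=1} m X_1^m X_2^(-m). sing = False means it is replaced by DDH_{0,2}.\<close>
definition Wc :: "(nat \<Rightarrow> nat \<Rightarrow> 'a::field_char_0) \<Rightarrow> (nat \<Rightarrow> nat \<Rightarrow> 'a) \<Rightarrow> nat \<Rightarrow> int list \<Rightarrow> bool \<Rightarrow> 'a" where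
  "Wc psihat yhat g a sing =
     (if (\<forall>x\<in>set a. 1 \<le> x) then of_int (prod_list a) * Hc psihat yhat g (map nat a) else 0)
   + (if g = 0 \<and> sing \<and> length a = 2 \<and> 1 \<le> a ! 0 \<and> a ! 1 = - (a ! 0) then of_int (a ! 0) else 0)"

text \<open>F h e x = coefficient of hbar^h u^e prod_i X_i^(x i).\<close>
type_synonym 'a ser = "int \<Rightarrow> nat \<Rightarrow> (nat \<Rightarrow> int) \<Rightarrow> 'a"

text \<open>Product (convolution; in every use below all coefficient sums are finite).\<close>
definition sprod :: "'a::comm_ring_1 ser \<Rightarrow> 'a ser \<Rightarrow> 'a ser" where
  "sprod F G h e x = (\<Sum>pq\<in>{((h1,e1,x1),(h2,e2,x2)). h1 + h2 = h \<and> e1 + e2 = e \<and>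
        (\<forall>i. x1 i + x2 i = x i) \<and> F h1 e1 x1 \<noteq> 0 \<and> G h2 e2 x2 \<noteq> 0}.
      (case pq of ((h1,e1,x1),(h2,e2,x2)) \<Rightarrow> F h1 e1 x1 * G h2 e2 x2))"

definition sone :: "'a::comm_ring_1 ser" where
  "sone h e x = (if h = 0 \<and> e = 0 \<and> x = (\<lambda>_. 0) then 1 else 0)"

definition ssum :: "('i \<Rightarrow> 'a::comm_ring_1 ser) \<Rightarrow> 'i set \<Rightarrow> 'a ser" where
  "ssum F I h e x = (\<Sum>i\<in>{i\<in>I. F i h e x \<noteq> 0}. F i h e x)"

definition sscale :: "'a::comm_ring_1 \<Rightarrow> 'a ser \<Rightarrow> 'a ser" where
  "sscale c F h e x = c * F h e x"

definition sshiftH :: "int \<Rightarrow> 'a::comm_ring_1 ser \<Rightarrow> 'a ser" where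
  "sshiftH d F h e x = F (h - d) e x"

definition expvec :: "nat list \<Rightarrow> int list \<Rightarrow> (nat \<Rightarrow> int)" where
  "expvec vs a = (\<lambda>i. \<Sum>j<length vs. if vs ! j = i then a ! j else 0)"

text \<open>W_{g,n}(X_{vs_1},...,X_{vs_n}) as a series (variables may repeat).\<close>
definition Wser :: "(nat \<Rightarrow> nat \<Rightarrow> 'a::field_char_0) \<Rightarrow> (nat \<Rightarrow> nat \<Rightarrow> 'a) \<Rightarrow> nat \<Rightarrow> nat list \<Rightarrow> bool \<Rightarrow> 'a ser" where
  "Wser psihat yhat g vs sing =
     ssum (\<lambda>a h e x. if h = 0 \<and> e = 0 \<and> x = expvec vs a then Wc psihat yhat g a sing else 0)
          {a. length a = length vs}"

text \<open>S(t) = (e^(t/2) - e^(-t/2))/t = sum_j Sco j t^j.\<close>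
definition Sco :: "nat \<Rightarrow> 'a::field_char_0" where
  "Sco j = (if even j then 1 / (2 ^ j * fact (j + 1)) else 0)"

definition Sfps :: "'a::field_char_0 fps" where
  "Sfps = Abs_fps Sco"

text \<open>The operator u hbar S(u hbar D_v), D_v = X_v d/dX_v.\<close>
definition opSig :: "nat \<Rightarrow> 'a::field_char_0 ser \<Rightarrow> 'a ser" where
  "opSig v F h e x = (\<Sum>j<e. of_int (x v) ^ j * Sco j * F (h - int (j + 1)) (e - (j + 1)) x)"

text \<open>The operator S(u hbar D_1).\<close>
definition opS1 :: "'a::field_char_0 ser \<Rightarrow> 'a ser" where
  "opS1 F h e x = (\<Sum>j\<le>e. of_int (x 1) ^ j * Sco j * F (h - int j) (e - j) x)"

text \<open>Substitution X_v := X_1 (v different from 1).\<close>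
definition ssubst :: "nat \<Rightarrow> 'a::comm_ring_1 ser \<Rightarrow> 'a ser" where
  "ssubst v F h e x = (if x v \<noteq> 0 then 0 else
     (\<Sum>t\<in>{t. F h e (x(1 := x 1 - t, v := t)) \<noteq> 0}. F h e (x(1 := x 1 - t, v := t))))"

text \<open>1/(hbar S(u hbar)).\<close>
definition sinvS :: "'a::field_char_0 ser" where
  "sinvS h e x = (if x = (\<lambda>_. 0) \<and> h = int e - 1 then fps_nth (inverse Sfps) e else 0)"

text \<open>T_{|J|+1}(z_1; z_J; u). The auxiliary barred variables are X_{n+1},...,X_{n+k};
  the operators act on them, then they are set equal to X_1.\<close>
definition Tser :: "(nat \<Rightarrow> nat \<Rightarrow> 'a::field_char_0) \<Rightarrow> (nat \<Rightarrow> nat \<Rightarrow> 'a) \<Rightarrow> nat \<Rightarrow> nat list \<Rightarrow> 'a ser" where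
  "Tser psihat yhat n J = ssum (\<lambda>(k, g). let bars = [n + 1..<n + 1 + k] in
       sscale (1 / fact k)
         (sshiftH (2 * int g - 2 + int k + int (length J))
           (fold ssubst bars (fold opSig bars
              (Wser psihat yhat g (bars @ J) (\<not> (k = 2 \<and> J = [])))))))
     {(k, g). 1 \<le> k}"

text \<open>calT_n(z_1; z_2..z_n; u). Ordered decompositions J_1,...,J_l of {2..n} (parts possibly
  empty) are encoded by assignment lists as (position j-2 holds the index of the part of j).\<close>
definition TT :: "(nat \<Rightarrow> nat \<Rightarrow> 'a::field_char_0) \<Rightarrow> (nat \<Rightarrow> nat \<Rightarrow> 'a) \<Rightarrow> nat \<Rightarrow> 'a ser" where
  "TT psihat yhat n = sprod sinvS (opS1 (ssum (\<lambda>(l, as).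
       sscale (1 / fact l)
         (foldr sprod (map (\<lambda>i. Tser psihat yhat n (filter (\<lambda>j. as ! (j - 2) = i) [2..<n + 1]))
                          [1..<l + 1]) sone))
     {(l, as). 1 \<le> l \<and> length as = n - 1 \<and> set as \<subseteq> {1..l}}))"

end

theory Submission imports Defs begin

definition low :: "'a::comm_ring_1 ser \<Rightarrow> nat \<Rightarrow> bool" where
  "low F m \<longleftrightarrow> (\<forall>h e x. e < m \<longrightarrow> F h e x = 0)"

lemma low_0[simp]: "low F 0" by (simp add: low_def)

definition SP :: "'a::comm_ring_1 ser \<Rightarrow> 'a ser \<Rightarrow> int \<Rightarrow> nat \<Rightarrow> (nat \<Rightarrow> int) \<Rightarrow> _" where
  "SP F G h e x = {((h1,e1,x1),(h2,e2,x2)). h1 + h2 = h \<and> e1 + e2 = e \<and>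
        (\<forall>i. x1 i + x2 i = x i) \<and> F h1 e1 x1 \<noteq> 0 \<and> G h2 e2 x2 \<noteq> 0}"

lemma sprod_SP: "sprod F G h e x = (\<Sum>pq\<in>SP F G h e x.
      (case pq of ((h1,e1,x1),(h2,e2,x2)) \<Rightarrow> F h1 e1 x1 * G h2 e2 x2))"
  unfolding sprod_def SP_def ..

lemma mem_SP: "((h1,e1,x1),(h2,e2,x2)) \<in> SP F G h e x \<longleftrightarrow> h1 + h2 = h \<and> e1 + e2 = e \<and>
        (\<forall>i. x1 i + x2 i = x i) \<and> F h1 e1 x1 \<noteq> 0 \<and> G h2 e2 x2 \<noteq> 0"
  by (simp add: SP_def)

lemma sprod_low:
  assumes "low F a" "low G b" shows "low (sprod F G) (a + b)"
  unfolding low_def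
proof (intro allI impI)
  fix h e x assume e: "e < a + b"
  have "SP F G h e x = {}"
  proof (rule ccontr)
    assume "SP F G h e x \<noteq> {}"
    then obtain h1 e1 x1 h2 e2 x2 where m: "((h1,e1,x1),(h2,e2,x2)) \<in> SP F G h e x" by auto
    then have "e1 \<ge> a" "e2 \<ge> b" using assms unfolding mem_SP low_def by (meson not_le)+
    then show False using m e unfolding mem_SP by simp
  qed
  then show "sprod F G h e x = 0" unfolding sprod_SP by simp
qed

lemma sprod_sone: "sprod F sone = F"
proof (intro ext)
  fix h e x
  have "SP F sone h e x = (if F h e x \<noteq> 0 then {((h,e,x),(0,0,\<lambda>_. 0))} else {})"
  proof -
    have "q \<in> SP F sone h e x \<longleftrightarrow> F h e x \<noteq> 0 \<and> q = ((h,e,x),(0,0,\<lambda>_. 0))" for q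
      by (cases q) (auto simp: mem_SP sone_def fun_eq_iff split: if_splits; metis ext)
    then show ?thesis by auto
  qed
  then show "sprod F sone h e x = F h e x" unfolding sprod_SP by (auto simp: sone_def)
qed

lemma ssum_low: "(\<And>i. i \<in> I \<Longrightarrow> low (F i) m) \<Longrightarrow> low (ssum F I) m"
  unfolding low_def ssum_def by auto

lemma sscale_low: "low F m \<Longrightarrow> low (sscale c F) m"
  unfolding low_def sscale_def by auto

lemma sshiftH_low: "low F m \<Longrightarrow> low (sshiftH d F) m"
  unfolding low_def sshiftH_def by auto

lemma ssubst_low: "low F m \<Longrightarrow> low (ssubst v F) m"
  unfolding low_def ssubst_def by auto


lemma fold_ssubst_low: "low F m \<Longrightarrow> low (fold ssubst vs F) m"
  by (induction vs arbitrary: F) (auto intro: ssubst_low)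

lemma opSig_low: "low F m \<Longrightarrow> low (opSig v F) (Suc m)"
  unfolding low_def opSig_def
proof (intro allI impI)
  fix h e x assume A: "\<forall>h e x. e < m \<longrightarrow> F h e x = 0" and e: "e < Suc m"
  show "(\<Sum>j<e. of_int (x v) ^ j * Sco j * F (h - int (j + 1)) (e - (j + 1)) x) = 0"
  proof (rule sum.neutral, intro ballI)
    fix j assume "j \<in> {..<e}"
    then have "e - (j+1) < m" using e by auto
    then show "of_int (x v) ^ j * Sco j * F (h - int (j + 1)) (e - (j + 1)) x = 0" using A by simp
  qed
qed

lemma fold_opSig_low: "low F m \<Longrightarrow> low (fold opSig vs F) (m + length vs)"
proof (induction vs arbitrary: F m)
  case Nil then show ?case by simp
next
  case (Cons v vs)
  have "low (opSig v F) (Suc m)" using Cons.prems by (rule opSig_low)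
  from Cons.IH[OF this] show ?case by simp
qed

lemma foldr_sprod_low:
  "(\<And>F. F \<in> set Fs \<Longrightarrow> low F 1) \<Longrightarrow> low (foldr sprod Fs sone) (length Fs)"
proof (induction Fs)
  case Nil then show ?case by simp
next
  case (Cons F Fs)
  have "low (sprod F (foldr sprod Fs sone)) (1 + length Fs)"
    by (rule sprod_low) (use Cons in auto)
  then show ?case by simp
qed

lemma low_mono: "low F m \<Longrightarrow> k \<le> m \<Longrightarrow> low F k"
  unfolding low_def by auto

lemma Tser_term_low:
  "length bars = k \<Longrightarrow> low (sscale c (sshiftH d (fold ssubst bars (fold opSig bars W)))) k"
proof -
  assume "length bars = k"
  moreover have "low (fold opSig bars W) (0 + length bars)"
    by (rule fold_opSig_low) simp
  ultimately show ?thesis by (auto intro!: sscale_low sshiftH_low fold_ssubst_low)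
qed

lemma Tser_low: "low (Tser psihat yhat n J) 1"
  unfolding Tser_def
proof (rule ssum_low)
  fix i :: "nat \<times> nat" assume "i \<in> {(k, g). 1 \<le> k}"
  then obtain k g where i: "i = (k,g)" "1 \<le> k" by auto
  show "low ((\<lambda>(k, g). let bars = [n + 1..<n + 1 + k] in
       sscale (1 / fact k)
         (sshiftH (2 * int g - 2 + int k + int (length J))
           (fold ssubst bars (fold opSig bars
              (Wser psihat yhat g (bars @ J) (\<not> (k = 2 \<and> J = [])))))))  i) 1"
    unfolding i Let_def split by (rule low_mono[OF Tser_term_low]) (use i in simp_all)
qed


lemma sum_nz_single:
  assumes "{i\<in>A. f i \<noteq> 0} \<subseteq> {c}"
  shows "sum f {i\<in>A. f i \<noteq> 0} = (if c \<in> A then f c else 0)"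
proof (cases "c \<in> A \<and> f c \<noteq> 0")
  case True
  then have "{i\<in>A. f i \<noteq> 0} = {c}" using assms by auto
  then show ?thesis using True by simp
next
  case False
  then have "{i\<in>A. f i \<noteq> 0} = {}" using assms by auto
  then show ?thesis using False by auto
qed

lemma Wser_zero: "h \<noteq> 0 \<or> e \<noteq> 0 \<Longrightarrow> Wser psihat yhat g vs s h e x = 0"
  unfolding Wser_def ssum_def by auto

lemma Wser_low: "low (Wser psihat yhat g vs s) 0" by simp

lemma expvec_notin: "i \<notin> set vs \<Longrightarrow> expvec vs a i = 0"
  unfolding expvec_def by (auto intro!: sum.neutral)

lemma expvec_Cons: "expvec (v#vs) (c#a) = (\<lambda>i. (if v = i then c else 0) + expvec vs a i)"
  unfolding expvec_def length_Cons sum.lessThan_Suc_shift by (rule ext) (simp, rule sum.cong, simp_all)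

lemma expvec_eq_iff:
  "distinct vs \<Longrightarrow> length a = length vs \<Longrightarrow>
    (expvec vs a = x \<longleftrightarrow> a = map x vs \<and> (\<forall>i. i \<notin> set vs \<longrightarrow> x i = 0))"
proof (induction vs arbitrary: a x)
  case Nil then show ?case by (auto simp: expvec_def)
next
  case (Cons v vs)
  obtain c a' where a: "a = c # a'" using Cons.prems by (cases a) auto
  have nv: "expvec vs a' v = 0" using Cons.prems by (simp add: expvec_notin)
  have "(\<forall>i. (if v = i then c else 0) + expvec vs a' i = x i) \<longleftrightarrow>
     c = x v \<and> (\<forall>i. expvec vs a' i = (x(v:=0)) i)"
  proof
    assume H: "\<forall>i. (if v = i then c else 0) + expvec vs a' i = x i"
    have "c = x v" using H[rule_format, of v] nv by simp
    moreover have "expvec vs a' i = (x(v:=0)) i" for i using H[rule_format, of i] nv by (cases "i = v") auto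
    ultimately show "c = x v \<and> (\<forall>i. expvec vs a' i = (x(v:=0)) i)" by auto
  next
    assume H: "c = x v \<and> (\<forall>i. expvec vs a' i = (x(v:=0)) i)"
    show "\<forall>i. (if v = i then c else 0) + expvec vs a' i = x i"
    proof
      fix i show "(if v = i then c else 0) + expvec vs a' i = x i" using H nv by (cases "i=v") auto
    qed
  qed
  then have "expvec (v#vs) a = x \<longleftrightarrow> c = x v \<and> expvec vs a' = x(v := 0)"
    unfolding a expvec_Cons fun_eq_iff by simp
  also have "\<dots> \<longleftrightarrow> c = x v \<and> a' = map (x(v:=0)) vs \<and> (\<forall>i. i \<notin> set vs \<longrightarrow> (x(v:=0)) i = 0)"
    using Cons a by auto
  also have "map (x(v:=0)) vs = map x vs" using Cons.prems by auto
  finally show ?case unfolding a by auto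
qed

lemma Wser_distinct:
  fixes psihat yhat :: "nat \<Rightarrow> nat \<Rightarrow> 'a::field_char_0"
  assumes "distinct vs"
  shows "Wser psihat yhat g vs s 0 0 x =
    (if \<forall>i. i \<notin> set vs \<longrightarrow> x i = 0 then Wc psihat yhat g (map x vs) s else 0)"
proof -
  define F :: "int list \<Rightarrow> int \<Rightarrow> nat \<Rightarrow> (nat \<Rightarrow> int) \<Rightarrow> 'a" where "F = (\<lambda>a h e x. if h = 0 \<and> e = 0 \<and> x = expvec vs a then Wc psihat yhat g a s else (0::'a))"
  let ?f = "\<lambda>a. F a 0 0 x"
  have "Wser psihat yhat g vs s 0 0 x = ssum F {a. length a = length vs} 0 0 x"
    unfolding Wser_def F_def ..
  also have "\<dots> = sum ?f {a\<in>{a. length a = length vs}. ?f a \<noteq> 0}"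
    by (simp only: ssum_def)
  also have "\<dots> = (if map x vs \<in> {a. length a = length vs} then ?f (map x vs) else 0)"
    by (rule sum_nz_single) (use expvec_eq_iff[OF assms] in \<open>auto simp: F_def\<close>)
  also have "\<dots> = (if \<forall>i. i \<notin> set vs \<longrightarrow> x i = 0 then Wc psihat yhat g (map x vs) s else 0)"
    using expvec_eq_iff[OF assms, of "map x vs" x] by (auto simp: F_def)
  finally show ?thesis .
qed

lemma Wc_hd: "Wc psihat yhat g (c # a) s \<noteq> 0 \<Longrightarrow> 1 \<le> c"
  unfolding Wc_def by (auto split: if_splits)

lemma Wc_sing: "length a \<noteq> 2 \<Longrightarrow> Wc psihat yhat g a s = Wc psihat yhat g a s'"
  unfolding Wc_def by auto


lemma ssubst_eval:
  "(\<And>z. F h e z = f z) \<Longrightarrow> ssubst v F h e x = (if x v \<noteq> 0 then 0 else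
     \<Sum>t\<in>{t. f (x(1 := x 1 - t, v := t)) \<noteq> 0}. f (x(1 := x 1 - t, v := t)))"
  unfolding ssubst_def by simp

lemma ssubst_single:
  assumes "v \<noteq> 1" "\<And>z. F h e z = f z" "\<And>z. f z \<noteq> 0 \<Longrightarrow> z 1 = 0"
  shows "ssubst v F h e x = (if x v \<noteq> 0 then 0 else f (x(1:=0, v:= x 1)))"
proof -
  let ?g = "\<lambda>t. f (x(1 := x 1 - t, v := t))"
  have "{t. ?g t \<noteq> 0} = {t\<in>UNIV. ?g t \<noteq> 0}" by simp
  moreover have "sum ?g {t\<in>UNIV. ?g t \<noteq> 0} = (if x 1 \<in> UNIV then ?g (x 1) else 0)"
  proof (rule sum_nz_single, safe)
    fix t assume "?g t \<noteq> 0"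
    from assms(3)[OF this] show "t = x 1" using assms(1) by simp
  qed
  ultimately show ?thesis using ssubst_eval[of F h e f v x, OF assms(2)] by simp
qed

lemma ssubst_W:
  fixes psihat yhat :: "nat \<Rightarrow> nat \<Rightarrow> 'a::field_char_0"
  assumes "v \<noteq> 1" "v \<notin> set J" "1 \<notin> set J" "distinct J"
    "\<And>z. F h e z = Wser psihat yhat g (v#J) s 0 0 z"
  shows "ssubst v F h e x = Wser psihat yhat g (1#J) s 0 0 x"
proof -
  have d1: "distinct (v#J)" "distinct (1#J)" using assms by auto
  have "ssubst v F h e x = (if x v \<noteq> 0 then 0 else Wser psihat yhat g (v#J) s 0 0 (x(1:=0, v:= x 1)))"
    by (rule ssubst_single[where f="Wser psihat yhat g (v#J) s 0 0" and F=F and h=h and e=e, OF assms(1) assms(5)]) (use assms in \<open>auto simp: Wser_distinct[OF d1(1)] split: if_splits\<close>)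
  also have "\<dots> = Wser psihat yhat g (1#J) s 0 0 x"
  proof -
    have m: "map (x(1 := 0, v := x 1)) J = map x J" using assms by auto
    show ?thesis unfolding Wser_distinct[OF d1(1)] Wser_distinct[OF d1(2)] m
      using assms(1,2,3) by (auto split: if_splits)
  qed
  finally show ?thesis .
qed

lemma expvec11:
  assumes "distinct J" "1 \<notin> set J" "length c' = length J"
  shows "expvec (1#1#J) (c0#c1#c') = x \<longleftrightarrow>
     c0 + c1 = x 1 \<and> c' = map x J \<and> (\<forall>i. i \<notin> insert 1 (set J) \<longrightarrow> x i = 0)"
proof -
  have "expvec (1#1#J) (c0#c1#c') = expvec (1#J) ((c0+c1)#c')"
    unfolding expvec_Cons by (rule ext) simp
  then show ?thesis using expvec_eq_iff[of "1#J" "(c0+c1)#c'" x] assms by auto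
qed


lemma Wser_ssum:
  fixes psihat yhat :: "nat \<Rightarrow> nat \<Rightarrow> 'a::field_char_0"
  shows "Wser psihat yhat g vs s 0 0 x = (\<Sum>c\<in>{c\<in>{c. length c = length vs}.
     (if x = expvec vs c then Wc psihat yhat g c s else 0) \<noteq> 0}.
     (if x = expvec vs c then Wc psihat yhat g c s else 0))"
proof -
  define F :: "int list \<Rightarrow> int \<Rightarrow> nat \<Rightarrow> (nat \<Rightarrow> int) \<Rightarrow> 'a" where "F = (\<lambda>a h e x. if h = 0 \<and> e = 0 \<and> x = expvec vs a then Wc psihat yhat g a s else (0::'a))"
  have "Wser psihat yhat g vs s 0 0 x = ssum F {a. length a = length vs} 0 0 x"
    unfolding Wser_def F_def ..
  also have "\<dots> = (\<Sum>c\<in>{c\<in>{c. length c = length vs}. F c 0 0 x \<noteq> 0}. F c 0 0 x)"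
    by (simp only: ssum_def)
  finally show ?thesis by (simp add: F_def)
qed

lemma ssubst2_W:
  fixes psihat yhat :: "nat \<Rightarrow> nat \<Rightarrow> 'a::field_char_0"
  assumes "a \<noteq> 1" "b \<noteq> 1" "a \<noteq> b" "a \<notin> set J" "b \<notin> set J" "1 \<notin> set J" "distinct J"
    "\<And>z. F h e z = Wser psihat yhat g (a#b#J) s 0 0 z" "J \<noteq> [] \<or> s = s'"
  shows "ssubst b (ssubst a F) h e x = Wser psihat yhat g (1#1#J) s' 0 0 x"
proof -
  have d: "distinct (a#b#J)" using assms by auto
  define Supp where "Supp = (\<forall>i. i \<notin> insert 1 (set J) \<longrightarrow> x i = 0)"
  define gf where "gf y = (if y a \<noteq> 0 then 0 else Wser psihat yhat g (a#b#J) s 0 0 (y(1:=0, a:= y 1)))" for y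
  have G: "ssubst a F h e y = gf y" for y
    unfolding gf_def
    by (rule ssubst_single[where f="Wser psihat yhat g (a#b#J) s 0 0" and F=F and h=h and e=e, OF assms(1) assms(8)])
      (use assms in \<open>auto simp: Wser_distinct[OF d] split: if_splits\<close>)
  have E: "ssubst b (ssubst a F) h e x = (if x b \<noteq> 0 then 0 else
      \<Sum>t\<in>{t. gf (x(1 := x 1 - t, b := t)) \<noteq> 0}. gf (x(1 := x 1 - t, b := t)))"
    by (rule ssubst_eval) (rule G)
  have mJ: "map (x(1 := x 1 - t, b := t, 1 := 0, a := x 1 - t)) J = map x J" for t
    using assms by auto
  have gfv: "gf (x(1:=x 1 - t, b:=t)) = (if Supp then Wc psihat yhat g ((x 1 - t) # t # map x J) s else 0)"
    if "x b = 0" for t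
    using that assms unfolding gf_def Wser_distinct[OF d] Supp_def
    by (auto simp: mJ)
  have Ws: "Wc psihat yhat g ((x 1 - t) # t # map x J) s = Wc psihat yhat g ((x 1 - t) # t # map x J) s'" for t
    using assms(9) Wc_sing[of "(x 1 - t) # t # map x J" psihat yhat g s s'] by auto
  let ?fr = "\<lambda>c. (if x = expvec (1#1#J) c then Wc psihat yhat g c s' else 0)"
  have R: "Wser psihat yhat g (1#1#J) s' 0 0 x = sum ?fr {c\<in>{c. length c = length (1#1#J)}. ?fr c \<noteq> 0}"
    by (rule Wser_ssum)
  show ?thesis
  proof (cases Supp)
    case False
    then obtain i where i: "i \<notin> insert 1 (set J)" "x i \<noteq> 0" unfolding Supp_def by auto
    have "x \<noteq> expvec (1#1#J) c" for c
    proof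
      assume "x = expvec (1#1#J) c"
      then have "x i = 0" using i expvec_notin[of i "1#1#J" c] by auto
      then show False using i by simp
    qed
    then have "{c\<in>{c. length c = length (1#1#J)}. ?fr c \<noteq> 0} = {}" by auto
    then have r0: "Wser psihat yhat g (1#1#J) s' 0 0 x = 0" using R by simp
    show ?thesis unfolding E r0 using gfv False by auto
  next
    case True
    then have xb: "x b = 0" unfolding Supp_def using assms by auto
    let ?g = "\<lambda>t. Wc psihat yhat g ((x 1 - t) # t # map x J) s"
    have L: "ssubst b (ssubst a F) h e x = sum ?g {t. ?g t \<noteq> 0}"
      unfolding E using gfv[OF xb] True xb by simp
    have "sum ?g {t. ?g t \<noteq> 0} = sum ?fr {c\<in>{c. length c = length (1#1#J)}. ?fr c \<noteq> 0}"
    proof (rule sum.reindex_bij_witness[where i="\<lambda>c. c ! 1" and j="\<lambda>t. (x 1 - t) # t # map x J"])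
      fix t assume "t \<in> {t. ?g t \<noteq> 0}"
      then have "?g t \<noteq> 0" by simp
      moreover have "x = expvec (1#1#J) ((x 1 - t) # t # map x J)"
        using expvec11[OF assms(7) assms(6), of "map x J" "x 1 - t" t x] True Supp_def by auto
      ultimately show "(x 1 - t) # t # map x J \<in> {c\<in>{c. length c = length (1#1#J)}. ?fr c \<noteq> 0}"
        and "?fr ((x 1 - t) # t # map x J) = ?g t" using Ws by auto
      show "((x 1 - t) # t # map x J) ! 1 = t" by simp
    next
      fix c assume c: "c \<in> {c\<in>{c. length c = length (1#1#J)}. ?fr c \<noteq> 0}"
      then obtain c0 c1 c' where cc: "c = c0 # c1 # c'" "length c' = length J"
        by (cases c; cases "tl c") auto
      have "x = expvec (1#1#J) c" using c by (auto split: if_splits)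
      then have "c0 + c1 = x 1" "c' = map x J"
        using expvec11[OF assms(7) assms(6) cc(2), of c0 c1 x] cc(1) by auto
      then show "(x 1 - c ! 1) # c ! 1 # map x J = c" using cc by auto
      then show "c ! 1 \<in> {t. ?g t \<noteq> 0}" using c Ws \<open>x = expvec (1#1#J) c\<close>
        by (auto split: if_splits)
    qed
    then show ?thesis using L R by simp
  qed
qed


lemma Sco0[simp]: "Sco 0 = 1" by (simp add: Sco_def)
lemma Sco1[simp]: "Sco 1 = 0" by (simp add: Sco_def)
lemma Sco1'[simp]: "Sco (Suc 0) = 0" by (simp add: Sco_def)

lemma opSig_e1: "opSig v F h 1 z = F (h - 1) 0 z"
  unfolding opSig_def by simp

lemma opSig_e1': "opSig v F h (Suc 0) z = F (h - 1) 0 z"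
  unfolding opSig_def by simp

lemma opSig_e2: "opSig v F h 2 z = F (h - 1) 1 z"
  unfolding opSig_def by (simp add: numeral_2_eq_2)

lemma ssubst_zero: "(\<And>z. F h e z = 0) \<Longrightarrow> ssubst v F h e x = 0"
  unfolding ssubst_def by simp

definition Tt :: "(nat \<Rightarrow> nat \<Rightarrow> 'a::field_char_0) \<Rightarrow> (nat \<Rightarrow> nat \<Rightarrow> 'a) \<Rightarrow> nat \<Rightarrow> nat list \<Rightarrow> nat \<times> nat \<Rightarrow> 'a ser" where
  "Tt psihat yhat n J = (\<lambda>(k, g). let bars = [n + 1..<n + 1 + k] in
       sscale (1 / fact k)
         (sshiftH (2 * int g - 2 + int k + int (length J))
           (fold ssubst bars (fold opSig bars
              (Wser psihat yhat g (bars @ J) (\<not> (k = 2 \<and> J = [])))))))"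

lemma Tser_Tt: "Tser psihat yhat n J h e x =
   (\<Sum>kg\<in>{kg\<in>{(k, g). 1 \<le> k}. Tt psihat yhat n J kg h e x \<noteq> 0}. Tt psihat yhat n J kg h e x)"
proof -
  have "Tser psihat yhat n J = ssum (Tt psihat yhat n J) {(k, g). 1 \<le> k}"
    unfolding Tser_def Tt_def ..
  then show ?thesis by (simp only: ssum_def)
qed

lemma Tt_low: "low (Tt psihat yhat n J (k,g)) k"
  unfolding Tt_def Let_def split by (rule Tser_term_low) simp

lemma Tt1: "Tt psihat yhat n J (1,g) h e x = ssubst (n+1) (opSig (n+1) (Wser psihat yhat g ((n+1)#J) True))
    (h - (2 * int g - 1 + int (length J))) e x"
  unfolding Tt_def Let_def split sscale_def sshiftH_def by simp

lemma Tt2: "Tt psihat yhat n J (2,g) h e x = 1/2 * ssubst (n+2) (ssubst (n+1) (opSig (n+2) (opSig (n+1)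
     (Wser psihat yhat g ((n+1)#(n+2)#J) (J \<noteq> [])))))
    (h - (2 * int g + int (length J))) e x"
proof -
  have u: "[n + 1..<n + 1 + 2] = [n+1, n+2]" by (simp add: upt_rec)
  show ?thesis unfolding Tt_def Let_def split sscale_def sshiftH_def u by simp
qed

lemma Tt1_e1:
  fixes psihat yhat :: "nat \<Rightarrow> nat \<Rightarrow> 'a::field_char_0"
  assumes "1 \<notin> set J" "n + 1 \<notin> set J" "distinct J" "1 \<le> n"
  shows "Tt psihat yhat n J (1,g) h 1 x =
    (if h = 2 * int g + int (length J) then Wser psihat yhat g (1#J) True 0 0 x else 0)"
proof (cases "h = 2 * int g + int (length J)")
  case True
  have "ssubst (n+1) (opSig (n+1) (Wser psihat yhat g ((n+1)#J) True)) 1 1 x = Wser psihat yhat g (1#J) True 0 0 x"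
    by (rule ssubst_W) (use assms in \<open>auto simp: opSig_e1 opSig_e1'\<close>)
  then show ?thesis unfolding Tt1 using True by simp
next
  case False
  have "ssubst (n+1) (opSig (n+1) (Wser psihat yhat g ((n+1)#J) True)) (h - (2 * int g - 1 + int (length J))) 1 x = 0"
    by (rule ssubst_zero) (use False in \<open>auto simp: opSig_e1 opSig_e1' Wser_zero\<close>)
  then show ?thesis unfolding Tt1 using False by simp
qed

lemma Tt1_e2: "Tt psihat yhat n J (1,g) h 2 x = 0"
  unfolding Tt1 by (rule ssubst_zero) (auto simp: opSig_e2 Wser_zero)

lemma Tt2_e2:
  fixes psihat yhat :: "nat \<Rightarrow> nat \<Rightarrow> 'a::field_char_0"
  assumes "1 \<notin> set J" "n + 1 \<notin> set J" "n + 2 \<notin> set J" "distinct J" "1 \<le> n"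
  shows "Tt psihat yhat n J (2,g) h 2 x =
    (if h = 2 * int g + int (length J) + 2 then 1/2 * Wser psihat yhat g (1#1#J) False 0 0 x else 0)"
proof (cases "h = 2 * int g + int (length J) + 2")
  case True
  have "ssubst (n+2) (ssubst (n+1) (opSig (n+2) (opSig (n+1)
     (Wser psihat yhat g ((n+1)#(n+2)#J) (J \<noteq> []))))) 2 2 x = Wser psihat yhat g (1#1#J) False 0 0 x"
    by (rule ssubst2_W[where s="J \<noteq> []"]) (use assms in \<open>auto simp: opSig_e1 opSig_e1' opSig_e2\<close>)
  then show ?thesis unfolding Tt2 using True by simp
next
  case False
  have "ssubst (n+2) (ssubst (n+1) (opSig (n+2) (opSig (n+1)
     (Wser psihat yhat g ((n+1)#(n+2)#J) (J \<noteq> []))))) (h - (2 * int g + int (length J))) 2 x = 0"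
    by (rule ssubst_zero, rule ssubst_zero) (use False in \<open>auto simp: opSig_e1 opSig_e1' opSig_e2 Wser_zero\<close>)
  then show ?thesis unfolding Tt2 using False by simp
qed


lemma Tt_lowk: "e < k \<Longrightarrow> Tt psihat yhat n J (k,g) h e x = 0"
  using Tt_low[of psihat yhat n J k g] unfolding low_def by blast

lemma Tser_e1_nz:
  fixes psihat yhat :: "nat \<Rightarrow> nat \<Rightarrow> 'a::field_char_0"
  assumes "1 \<notin> set J" "n + 1 \<notin> set J" "distinct J" "1 \<le> n"
    and "Tser psihat yhat n J h 1 x \<noteq> 0"
  shows "\<exists>g. h = 2 * int g + int (length J)"
proof -
  have "{kg\<in>{(k, g). 1 \<le> k}. Tt psihat yhat n J kg h 1 x \<noteq> 0} \<noteq> {}"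
    using assms(5) unfolding Tser_Tt by (metis sum.empty)
  then obtain k g where kg: "1 \<le> k" "Tt psihat yhat n J (k,g) h 1 x \<noteq> 0" by auto
  then have "k = 1" using Tt_lowk[of 1 k psihat yhat n J g h x] by (cases "k = 1") auto
  then show ?thesis using kg Tt1_e1[OF assms(1-4), of psihat yhat g h x] by (auto split: if_splits)
qed

lemma Tser_e1:
  fixes psihat yhat :: "nat \<Rightarrow> nat \<Rightarrow> 'a::field_char_0"
  assumes "1 \<notin> set J" "n + 1 \<notin> set J" "distinct J" "1 \<le> n"
  shows "Tser psihat yhat n J (2 * int g + int (length J)) 1 x = Wser psihat yhat g (1#J) True 0 0 x"
proof -
  have "Tser psihat yhat n J (2 * int g + int (length J)) 1 x =
     (if (1::nat,g) \<in> {(k, g). 1 \<le> k} then Tt psihat yhat n J (1,g) (2 * int g + int (length J)) 1 x else 0)"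
    unfolding Tser_Tt
  proof (rule sum_nz_single, safe)
    fix k g' assume kg: "1 \<le> k" "Tt psihat yhat n J (k,g') (2 * int g + int (length J)) 1 x \<noteq> 0"
    then have "k = 1" using Tt_lowk[of 1 k psihat yhat n J g' _ x] by (cases "k = 1") auto
    then show "k = 1" "g' = g" using kg Tt1_e1[OF assms(1-4), of psihat yhat g' "2 * int g + int (length J)" x] by (auto split: if_splits)
  qed
  then show ?thesis using Tt1_e1[OF assms(1-4), of psihat yhat g "2 * int g + int (length J)" x] by simp
qed

lemma Tser_e2:
  fixes psihat yhat :: "nat \<Rightarrow> nat \<Rightarrow> 'a::field_char_0"
  assumes "1 \<notin> set J" "n + 1 \<notin> set J" "n + 2 \<notin> set J" "distinct J" "1 \<le> n"
  shows "Tser psihat yhat n J (2 * int g + int (length J)) 2 x =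
     (if g = 0 then 0 else 1/2 * Wser psihat yhat (g - 1) (1#1#J) False 0 0 x)"
proof -
  have "Tser psihat yhat n J (2 * int g + int (length J)) 2 x =
     (if (2::nat,g-1) \<in> {(k, g). 1 \<le> k} then Tt psihat yhat n J (2,g-1) (2 * int g + int (length J)) 2 x else 0)"
    unfolding Tser_Tt
  proof (rule sum_nz_single, safe)
    fix k g' assume kg: "1 \<le> k" "Tt psihat yhat n J (k,g') (2 * int g + int (length J)) 2 x \<noteq> 0"
    then have "k \<noteq> 1" using Tt1_e2 by metis
    moreover have "k \<le> 2" using kg Tt_lowk[of 2 k psihat yhat n J g' _ x] by (cases "k \<le> 2") auto
    ultimately have "k = 2" using kg by auto
    then show "k = 2" "g' = g - 1" using kg Tt2_e2[OF assms, of psihat yhat g' "2 * int g + int (length J)" x] by (auto split: if_splits)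
  qed
  then show ?thesis using Tt2_e2[OF assms, of psihat yhat "g-1" "2 * int g + int (length J)" x] by auto
qed


definition CP :: "int \<Rightarrow> nat \<Rightarrow> (nat \<Rightarrow> int) \<Rightarrow> ((int \<times> nat \<times> (nat \<Rightarrow> int)) \<times> (int \<times> nat \<times> (nat \<Rightarrow> int))) set" where
  "CP h e x = {((h1,e1,x1),(h2,e2,x2)). h1 + h2 = h \<and> e1 + e2 = e \<and> (\<forall>i. x1 i + x2 i = x i)}"

lemma mem_CP: "((h1,e1,x1),(h2,e2,x2)) \<in> CP h e x \<longleftrightarrow> h1 + h2 = h \<and> e1 + e2 = e \<and> (\<forall>i. x1 i + x2 i = x i)"
  by (simp add: CP_def)

lemma sprod_param:
  fixes F G :: "'a::comm_ring_1 ser"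
  assumes "finite M" "inj_on p M"
    "\<And>q. q \<in> SP F G h e x \<Longrightarrow> q \<in> p ` M"
  shows "sprod F G h e x = (\<Sum>m\<in>M. if p m \<in> CP h e x then
      (case p m of ((h1,e1,x1),(h2,e2,x2)) \<Rightarrow> F h1 e1 x1 * G h2 e2 x2) else 0)"
proof -
  let ?ff = "\<lambda>q. (case q of ((h1,e1,x1),(h2,e2,x2)) \<Rightarrow> F h1 e1 x1 * G h2 e2 x2)"
  have sub: "SP F G h e x \<subseteq> p ` M \<inter> CP h e x"
  proof
    fix q assume q: "q \<in> SP F G h e x"
    then have "q \<in> CP h e x" by (cases q) (auto simp: mem_SP mem_CP)
    then show "q \<in> p ` M \<inter> CP h e x" using assms(3)[OF q] by auto
  qed
  have z: "?ff q = 0" if "q \<in> p ` M \<inter> CP h e x - SP F G h e x" for q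
  proof -
    have "q \<in> CP h e x" "q \<notin> SP F G h e x" using that by auto
    then show ?thesis by (cases q) (auto simp: mem_SP mem_CP)
  qed
  have "sprod F G h e x = sum ?ff (SP F G h e x)" by (rule sprod_SP)
  also have "\<dots> = sum ?ff (p ` M \<inter> CP h e x)"
    by (rule sum.mono_neutral_left) (use assms(1) sub z in auto)
  also have "\<dots> = sum (\<lambda>q. if q \<in> CP h e x then ?ff q else 0) (p ` M)"
    by (rule sum.inter_restrict) (use assms(1) in simp)
  also have "\<dots> = (\<Sum>m\<in>M. if p m \<in> CP h e x then ?ff (p m) else 0)"
    by (subst sum.reindex[OF assms(2)]) simp
  finally show ?thesis .
qed

lemma Tser_low1: "low (Tser psihat yhat n J) (Suc 0)"
  using Tser_low by simp

definition Sig :: "(nat \<Rightarrow> nat \<Rightarrow> 'a::field_char_0) \<Rightarrow> (nat \<Rightarrow> nat \<Rightarrow> 'a) \<Rightarrow> nat \<Rightarrow> nat \<times> nat list \<Rightarrow> 'a ser" where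
  "Sig psihat yhat n = (\<lambda>(l, as).
       sscale (1 / fact l)
         (foldr sprod (map (\<lambda>i. Tser psihat yhat n (filter (\<lambda>j. as ! (j - 2) = i) [2..<n + 1]))
                          [1..<l + 1]) sone))"

definition SigS where "SigS psihat yhat n = ssum (Sig psihat yhat n)
     {(l, as). 1 \<le> l \<and> length as = n - 1 \<and> set as \<subseteq> {1..l}}"

lemma TT_SigS: "TT psihat yhat n = sprod sinvS (opS1 (SigS psihat yhat n))"
  unfolding TT_def SigS_def Sig_def ..

lemma Sig_low: "low (Sig psihat yhat n (l, as)) l"
proof -
  have "low (foldr sprod (map (\<lambda>i. Tser psihat yhat n (filter (\<lambda>j. as ! (j - 2) = i) [2..<n + 1]))
                          [1..<l + 1]) sone) (length (map (\<lambda>i. Tser psihat yhat n (filter (\<lambda>j. as ! (j - 2) = i) [2..<n + 1]))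
                          [1..<l + 1]))"
    by (rule foldr_sprod_low) (auto intro: Tser_low Tser_low1)
  then have "low (foldr sprod (map (\<lambda>i. Tser psihat yhat n (filter (\<lambda>j. as ! (j - 2) = i) [2..<n + 1]))
                          [1..<l + 1]) sone) l"
    by (simp only: length_map length_upt add_diff_cancel_right')
  then show ?thesis unfolding Sig_def split by (rule sscale_low)
qed

lemma SigS_low: "low (SigS psihat yhat n) 1"
  unfolding SigS_def by (rule ssum_low) (auto intro: low_mono[OF Sig_low])

lemma inverse_Sfps0: "inverse (Sfps::'a::field_char_0 fps) $ 0 = 1"
  by (simp add: Sfps_def)

lemma inverse_Sfps1: "inverse (Sfps::'a::field_char_0 fps) $ 1 = 0"
  by (simp add: fps_inverse_def Sfps_def)

lemma inverse_Sfps1': "inverse (Sfps::'a::field_char_0 fps) $ Suc 0 = 0"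
  using inverse_Sfps1 by simp

lemma Sfps0: "(Sfps::'a::field_char_0 fps) $ 0 = 1"
  by (simp add: Sfps_def)

lemma TT_step1:
  fixes psihat yhat :: "nat \<Rightarrow> nat \<Rightarrow> 'a::field_char_0"
  shows "TT psihat yhat n h 2 x = SigS psihat yhat n (h + 1) 2 x"
proof -
  let ?G = "opS1 (SigS psihat yhat n)"
  let ?p = "\<lambda>e1::nat. ((int e1 - 1, e1, (\<lambda>_. 0::int)), (h - int e1 + 1, 2 - e1, x))"
  have "sprod sinvS ?G h 2 x = (\<Sum>m\<in>{0,1,2}. if ?p m \<in> CP h 2 x then
      (case ?p m of ((h1,e1,x1),(h2,e2,x2)) \<Rightarrow> sinvS h1 e1 x1 * ?G h2 e2 x2) else 0)"
  proof (rule sprod_param)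
    show "inj_on ?p {0,1,2}" by (auto simp: inj_on_def)
  next
    fix q assume q: "q \<in> SP sinvS ?G h 2 x"
    obtain h1 e1 x1 h2 e2 x2 where qq: "q = ((h1,e1,x1),(h2,e2,x2))" by (cases q) auto
    from q[unfolded qq mem_SP] have "x1 = (\<lambda>_. 0)" "h1 = int e1 - 1" "e1 \<le> 2" "e2 = 2 - e1" "h2 = h - int e1 + 1"
      "\<forall>i. x1 i + x2 i = x i"
      by (auto simp: sinvS_def split: if_splits)
    then have "q = ?p e1" unfolding qq by auto
    then show "q \<in> ?p ` {0,1,2}" using \<open>e1 \<le> 2\<close> by auto
  qed simp
  also have "\<dots> = ?G (h + 1) 2 x + sinvS 1 2 (\<lambda>_. 0) * ?G (h - 1) 0 x"
    by (simp add: mem_CP sinvS_def inverse_Sfps1' Sfps0)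
  also have "?G (h - 1) 0 x = 0"
    using SigS_low[of psihat yhat n] unfolding opS1_def low_def by simp
  also have "?G (h + 1) 2 x = SigS psihat yhat n (h + 1) 2 x"
    using SigS_low[of psihat yhat n] unfolding opS1_def low_def by (simp add: numeral_2_eq_2)
  finally show ?thesis unfolding TT_SigS by simp
qed


definition Aset :: "nat \<Rightarrow> nat \<Rightarrow> nat list set" where
  "Aset n l = {as. set as \<subseteq> {1..l} \<and> length as = n - 1}"

lemma finite_Aset: "finite (Aset n l)"
  unfolding Aset_def by (rule finite_lists_length_eq) simp

lemma Aset1: "Aset n 1 = {replicate (n - 1) 1}"
  unfolding Aset_def by (auto intro!: replicate_eqI)

lemma SigS_e2:
  fixes psihat yhat :: "nat \<Rightarrow> nat \<Rightarrow> 'a::field_char_0"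
  shows "SigS psihat yhat n h 2 x = Sig psihat yhat n (1, replicate (n - 1) 1) h 2 x
     + (\<Sum>as\<in>Aset n 2. Sig psihat yhat n (2, as) h 2 x)"
proof -
  let ?S = "{(l, as). 1 \<le> l \<and> length as = n - 1 \<and> set as \<subseteq> {1..l}}"
  let ?S2 = "Sigma {1,2} (Aset n)"
  let ?f = "\<lambda>i. Sig psihat yhat n i h 2 x"
  have "SigS psihat yhat n h 2 x = sum ?f {i\<in>?S. ?f i \<noteq> 0}"
    unfolding SigS_def ssum_def ..
  also have "\<dots> = sum ?f ?S2"
  proof (rule sum.mono_neutral_left)
    show "finite ?S2" using finite_Aset by auto
    show "{i\<in>?S. ?f i \<noteq> 0} \<subseteq> ?S2"
    proof
      fix i assume i: "i \<in> {i\<in>?S. ?f i \<noteq> 0}"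
      obtain l as where ii: "i = (l, as)" by (cases i)
      have "l \<le> 2" using i Sig_low[of psihat yhat n l as] unfolding ii low_def
        by (cases "l \<le> 2") auto
      then show "i \<in> ?S2" using i unfolding ii Aset_def by auto
    qed
    show "\<forall>i\<in>?S2 - {i\<in>?S. ?f i \<noteq> 0}. ?f i = 0"
      unfolding Aset_def by auto
  qed
  also have "\<dots> = (\<Sum>l\<in>{1,2}. \<Sum>as\<in>Aset n l. ?f (l, as))"
    using sum.Sigma[of "{1,2}" "Aset n" "\<lambda>l as. ?f (l,as)"] finite_Aset by simp
  also have "\<dots> = (\<Sum>as\<in>Aset n 1. ?f (1, as)) + (\<Sum>as\<in>Aset n 2. ?f (2, as))"
    by simp
  finally show ?thesis unfolding Aset1 by simp
qed

lemma Sig1: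
  "Sig psihat yhat n (1, replicate (n - 1) 1) h e x = Tser psihat yhat n [2..<n + 1] h e x"
proof -
  have f: "filter (\<lambda>j. replicate (n - 1) 1 ! (j - 2) = 1) [2..<n + 1] = [2..<n + 1]"
    by (rule filter_True) auto
  have u: "[1..<1 + 1] = [1]" by simp
  show ?thesis
    by (simp only: Sig_def split u list.map f foldr_Cons foldr_Nil o_apply id_apply sprod_sone)
      (simp add: sscale_def)
qed

lemma Sig2:
  "Sig psihat yhat n (2, as) h e x = 1/2 * sprod (Tser psihat yhat n (filter (\<lambda>j. as ! (j - 2) = 1) [2..<n + 1]))
       (Tser psihat yhat n (filter (\<lambda>j. as ! (j - 2) = 2) [2..<n + 1])) h e x"
proof -
  have u: "[1..<2 + 1] = [1, 2]" by (simp add: upt_rec)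
  show ?thesis unfolding Sig_def sscale_def split u by (simp add: sprod_sone)
qed


definition yv :: "nat list \<Rightarrow> (nat \<Rightarrow> int) \<Rightarrow> int \<Rightarrow> nat \<Rightarrow> int" where
  "yv J x m = (\<lambda>i. if i = 1 then m else if i \<in> set J then x i else 0)"

lemma cover:
  fixes psihat yhat :: "nat \<Rightarrow> nat \<Rightarrow> 'a::field_char_0"
  assumes "1 \<notin> set J1" "1 \<notin> set J2" "set J1 \<inter> set J2 = {}" "distinct J1" "distinct J2"
    and "Wser psihat yhat g1 (1#J1) s1 0 0 z1 \<noteq> 0" "Wser psihat yhat g2 (1#J2) s2 0 0 z2 \<noteq> 0"
    and "\<forall>i. z1 i + z2 i = x i"
  shows "z1 1 \<in> {1..x 1 - 1} \<and> z1 = yv J1 x (z1 1) \<and> z2 = yv J2 x (x 1 - z1 1)"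
proof -
  have d: "distinct (1#J1)" "distinct (1#J2)" using assms by auto
  from assms(6) have s1: "\<forall>i. i \<notin> set (1#J1) \<longrightarrow> z1 i = 0" and w1: "Wc psihat yhat g1 (z1 1 # map z1 J1) s1 \<noteq> 0"
    unfolding Wser_distinct[OF d(1)] by (auto split: if_splits)
  from assms(7) have s2: "\<forall>i. i \<notin> set (1#J2) \<longrightarrow> z2 i = 0" and w2: "Wc psihat yhat g2 (z2 1 # map z2 J2) s2 \<noteq> 0"
    unfolding Wser_distinct[OF d(2)] by (auto split: if_splits)
  have "1 \<le> z1 1" "1 \<le> z2 1" using Wc_hd w1 w2 by blast+
  moreover have "z2 1 = x 1 - z1 1" using assms(8) by (metis add_diff_cancel_left')
  moreover have "z1 = yv J1 x (z1 1)"
  proof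
    fix i show "z1 i = yv J1 x (z1 1) i"
    proof (cases "i = 1")
      case True then show ?thesis by (simp add: yv_def)
    next
      case F: False
      show ?thesis
      proof (cases "i \<in> set J1")
        case True
        then have "i \<notin> set J2" using assms(3) by auto
        then have "z2 i = 0" using s2 F by auto
        then have "z1 i = x i" using assms(8) by (metis add.right_neutral)
        then show ?thesis using True F by (simp add: yv_def)
      next
        case False
        then show ?thesis using s1 F by (simp add: yv_def)
      qed
    qed
  qed
  moreover have "z2 = yv J2 x (x 1 - z1 1)"
  proof
    fix i show "z2 i = yv J2 x (x 1 - z1 1) i"
    proof (cases "i = 1")
      case True then show ?thesis using \<open>z2 1 = x 1 - z1 1\<close> by (simp add: yv_def)
    next
      case F: False
      show ?thesis
      proof (cases "i \<in> set J2")
        case True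
        then have "i \<notin> set J1" using assms(3) by auto
        then have "z1 i = 0" using s1 F by auto
        then have "z2 i = x i" using assms(8) by (metis add.left_neutral)
        then show ?thesis using True F by (simp add: yv_def)
      next
        case False
        then show ?thesis using s2 F by (simp add: yv_def)
      qed
    qed
  qed
  ultimately show ?thesis by auto
qed

lemma core_W:
  fixes psihat yhat :: "nat \<Rightarrow> nat \<Rightarrow> 'a::field_char_0"
  assumes "1 \<notin> set J1" "1 \<notin> set J2" "set J1 \<inter> set J2 = {}" "distinct J1" "distinct J2"
  shows "sprod (Wser psihat yhat g1 (1#J1) True) (Wser psihat yhat g2 (1#J2) True) 0 0 x =
    (\<Sum>m\<in>{1..x 1 - 1}. if (\<forall>i. yv J1 x m i + yv J2 x (x 1 - m) i = x i) then
       Wser psihat yhat g1 (1#J1) True 0 0 (yv J1 x m) * Wser psihat yhat g2 (1#J2) True 0 0 (yv J2 x (x 1 - m)) else 0)"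
proof -
  let ?p = "\<lambda>m. (((0::int),(0::nat),yv J1 x m),((0::int),(0::nat),yv J2 x (x 1 - m)))"
  have "sprod (Wser psihat yhat g1 (1#J1) True) (Wser psihat yhat g2 (1#J2) True) 0 0 x =
    (\<Sum>m\<in>{1..x 1 - 1}. if ?p m \<in> CP 0 0 x then
      (case ?p m of ((h1,e1,x1),(h2,e2,x2)) \<Rightarrow> Wser psihat yhat g1 (1#J1) True h1 e1 x1 * Wser psihat yhat g2 (1#J2) True h2 e2 x2) else 0)"
  proof (rule sprod_param)
    show "inj_on ?p {1..x 1 - 1}"
    proof (rule inj_onI)
      fix m m' assume "?p m = ?p m'"
      then have "yv J1 x m 1 = yv J1 x m' 1" by simp
      then show "m = m'" by (simp add: yv_def)
    qed
  next
    fix q assume q: "q \<in> SP (Wser psihat yhat g1 (1#J1) True) (Wser psihat yhat g2 (1#J2) True) 0 0 x"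
    obtain h1 e1 z1 h2 e2 z2 where qq: "q = ((h1,e1,z1),(h2,e2,z2))" by (cases q) auto
    from q[unfolded qq mem_SP] have nz: "Wser psihat yhat g1 (1#J1) True h1 e1 z1 \<noteq> 0"
      "Wser psihat yhat g2 (1#J2) True h2 e2 z2 \<noteq> 0" "\<forall>i. z1 i + z2 i = x i" by auto
    then have "h1 = 0" "e1 = 0" "h2 = 0" "e2 = 0" using Wser_zero by blast+
    with nz cover[OF assms, of psihat yhat g1 True z1 g2 True z2 x]
    show "q \<in> ?p ` {1..x 1 - 1}" unfolding qq by (auto intro!: image_eqI[where x="z1 1"])
  qed simp
  then show ?thesis by (simp only: mem_CP prod.case add_0 simp_thms)
qed


lemma core_T:
  fixes psihat yhat :: "nat \<Rightarrow> nat \<Rightarrow> 'a::field_char_0"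
  assumes a: "1 \<notin> set J1" "1 \<notin> set J2" "set J1 \<inter> set J2 = {}" "distinct J1" "distinct J2"
    and b: "n + 1 \<notin> set J1" "n + 1 \<notin> set J2" "1 \<le> n" "length J1 + length J2 + 1 = n"
  shows "sprod (Tser psihat yhat n J1) (Tser psihat yhat n J2) (2 * int g - 2 + int n + 1) 2 x =
    (\<Sum>g1\<le>g. \<Sum>m\<in>{1..x 1 - 1}. if (\<forall>i. yv J1 x m i + yv J2 x (x 1 - m) i = x i) then
       Wser psihat yhat g1 (1#J1) True 0 0 (yv J1 x m) * Wser psihat yhat (g - g1) (1#J2) True 0 0 (yv J2 x (x 1 - m)) else 0)"
proof -
  let ?H = "2 * int g - 2 + int n + 1"
  let ?T1 = "Tser psihat yhat n J1" and ?T2 = "Tser psihat yhat n J2"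
  let ?p = "\<lambda>(g1::nat, m::int). ((2 * int g1 + int (length J1), (1::nat), yv J1 x m),
      (2 * int (g - g1) + int (length J2), (1::nat), yv J2 x (x 1 - m)))"
  let ?M = "{..g} \<times> {1..x 1 - 1}"
  have "sprod ?T1 ?T2 ?H 2 x = (\<Sum>gm\<in>?M. if ?p gm \<in> CP ?H 2 x then
      (case ?p gm of ((h1,e1,x1),(h2,e2,x2)) \<Rightarrow> ?T1 h1 e1 x1 * ?T2 h2 e2 x2) else 0)"
  proof (rule sprod_param)
    show "inj_on ?p ?M"
    proof (rule inj_onI)
      fix gm gm' assume "gm \<in> ?M" "gm' \<in> ?M" and e: "?p gm = ?p gm'"
      obtain g1 m g1' m' where gg: "gm = (g1, m)" "gm' = (g1', m')" by (cases gm; cases gm') auto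
      from e have "yv J1 x m 1 = yv J1 x m' 1" "2 * int g1 + int (length J1) = 2 * int g1' + int (length J1)"
        unfolding gg by simp_all
      then show "gm = gm'" unfolding gg by (simp add: yv_def)
    qed
  next
    fix q assume q: "q \<in> SP ?T1 ?T2 ?H 2 x"
    obtain h1 e1 z1 h2 e2 z2 where qq: "q = ((h1,e1,z1),(h2,e2,z2))" by (cases q) auto
    from q[unfolded qq mem_SP] have nz: "?T1 h1 e1 z1 \<noteq> 0" "?T2 h2 e2 z2 \<noteq> 0"
      and sums: "h1 + h2 = ?H" "e1 + e2 = 2" "\<forall>i. z1 i + z2 i = x i" by auto
    have "e1 \<ge> 1" using nz(1) Tser_low1[of psihat yhat n J1] unfolding low_def by (metis less_one not_le One_nat_def)
    moreover have "e2 \<ge> 1" using nz(2) Tser_low1[of psihat yhat n J2] unfolding low_def by (metis less_one not_le One_nat_def)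
    ultimately have e: "e1 = 1" "e2 = 1" using sums(2) by auto
    obtain g1 where g1: "h1 = 2 * int g1 + int (length J1)"
      using Tser_e1_nz[OF a(1) b(1) a(4) b(3)] nz(1) e by blast
    obtain g2 where g2: "h2 = 2 * int g2 + int (length J2)"
      using Tser_e1_nz[OF a(2) b(2) a(5) b(3)] nz(2) e by blast
    have gs: "g1 + g2 = g" using sums(1) g1 g2 b(4) by linarith
    have w1: "Wser psihat yhat g1 (1#J1) True 0 0 z1 \<noteq> 0"
      using nz(1) e g1 Tser_e1[OF a(1) b(1) a(4) b(3), of psihat yhat g1 z1] by simp
    have w2: "Wser psihat yhat g2 (1#J2) True 0 0 z2 \<noteq> 0"
      using nz(2) e g2 Tser_e1[OF a(2) b(2) a(5) b(3), of psihat yhat g2 z2] by simp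
    have c: "z1 1 \<in> {1..x 1 - 1} \<and> z1 = yv J1 x (z1 1) \<and> z2 = yv J2 x (x 1 - z1 1)"
      by (rule cover[OF a w1 w2 sums(3)])
    have "q = ?p (g1, z1 1)" unfolding qq using c e g1 g2 gs by auto
    moreover have "(g1, z1 1) \<in> ?M" using c gs by auto
    ultimately show "q \<in> ?p ` ?M" by blast
  qed simp
  also have "\<dots> = (\<Sum>gm\<in>?M. case gm of (g1, m) \<Rightarrow> if (\<forall>i. yv J1 x m i + yv J2 x (x 1 - m) i = x i) then
       Wser psihat yhat g1 (1#J1) True 0 0 (yv J1 x m) * Wser psihat yhat (g - g1) (1#J2) True 0 0 (yv J2 x (x 1 - m)) else 0)"
  proof (rule sum.cong[OF refl])
    fix gm assume "gm \<in> ?M"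
    then obtain g1 m where gm: "gm = (g1, m)" "g1 \<le> g" by auto
    have hs: "2 * int g1 + int (length J1) + (2 * int (g - g1) + int (length J2)) = ?H"
      using gm(2) b(4) by (simp add: of_nat_diff)
    show "(if ?p gm \<in> CP ?H 2 x then
      (case ?p gm of ((h1,e1,x1),(h2,e2,x2)) \<Rightarrow> ?T1 h1 e1 x1 * ?T2 h2 e2 x2) else 0) =
      (case gm of (g1, m) \<Rightarrow> if (\<forall>i. yv J1 x m i + yv J2 x (x 1 - m) i = x i) then
       Wser psihat yhat g1 (1#J1) True 0 0 (yv J1 x m) * Wser psihat yhat (g - g1) (1#J2) True 0 0 (yv J2 x (x 1 - m)) else 0)"
      unfolding gm(1) prod.case mem_CP
      using hs Tser_e1[OF a(1) b(1) a(4) b(3), of psihat yhat g1 "yv J1 x m"]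
        Tser_e1[OF a(2) b(2) a(5) b(3), of psihat yhat "g - g1" "yv J2 x (x 1 - m)"]
      by simp
  qed
  also have "\<dots> = (\<Sum>g1\<le>g. \<Sum>m\<in>{1..x 1 - 1}. if (\<forall>i. yv J1 x m i + yv J2 x (x 1 - m) i = x i) then
       Wser psihat yhat g1 (1#J1) True 0 0 (yv J1 x m) * Wser psihat yhat (g - g1) (1#J2) True 0 0 (yv J2 x (x 1 - m)) else 0)"
    by (rule sum.cartesian_product[symmetric])
  finally show ?thesis .
qed


lemma filt_sl: "filter P [a..<b] = sorted_list_of_set {j\<in>{a..<b}. P j}"
proof -
  have A: "{j\<in>{a..<b}. P j} = set (filter P [a..<b])" by auto
  have "sorted (filter P [a..<b])" by (rule sorted_wrt_filter) simp
  moreover have "distinct (filter P [a..<b])" by simp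
  ultimately show ?thesis unfolding A by (simp only: sorted_list_of_set_sort_remdups distinct_remdups_id sorted_sort_id)
qed

lemma core_I:
  fixes psihat yhat :: "nat \<Rightarrow> nat \<Rightarrow> 'a::field_char_0"
  assumes "I \<subseteq> {2..n}" "1 \<le> n"
  shows "sprod (Tser psihat yhat n (sorted_list_of_set I)) (Tser psihat yhat n (sorted_list_of_set ({2..n} - I)))
     (2 * int g - 2 + int n + 1) 2 x =
   (\<Sum>g1\<le>g. sprod (Wser psihat yhat g1 (1 # sorted_list_of_set I) True)
                    (Wser psihat yhat (g - g1) (1 # sorted_list_of_set ({2..n} - I)) True) 0 0 x)"
proof -
  have fI: "finite I" using assms(1) finite_subset by blast
  let ?J1 = "sorted_list_of_set I" and ?J2 = "sorted_list_of_set ({2..n} - I)"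
  have s: "set ?J1 = I" "set ?J2 = {2..n} - I" using fI by simp_all
  have a: "1 \<notin> set ?J1" "1 \<notin> set ?J2" "set ?J1 \<inter> set ?J2 = {}" "distinct ?J1" "distinct ?J2"
    using s assms(1) by auto
  have "card I + card ({2..n} - I) = card {2..n}"
    using card_Diff_subset[OF fI assms(1)] card_mono[OF _ assms(1)] by simp
  then have "length ?J1 + length ?J2 + 1 = n" using assms(2) fI by simp
  moreover have "n + 1 \<notin> set ?J1" "n + 1 \<notin> set ?J2" using s assms(1) by auto
  ultimately have T: "sprod (Tser psihat yhat n ?J1) (Tser psihat yhat n ?J2) (2 * int g - 2 + int n + 1) 2 x =
    (\<Sum>g1\<le>g. \<Sum>m\<in>{1..x 1 - 1}. if (\<forall>i. yv ?J1 x m i + yv ?J2 x (x 1 - m) i = x i) then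
       Wser psihat yhat g1 (1#?J1) True 0 0 (yv ?J1 x m) * Wser psihat yhat (g - g1) (1#?J2) True 0 0 (yv ?J2 x (x 1 - m)) else 0)"
    using core_T[OF a, of n psihat yhat g x] assms(2) by simp
  show ?thesis unfolding T core_W[OF a] ..
qed

lemma Aset_bij:
  fixes f :: "nat list \<Rightarrow> nat list \<Rightarrow> 'a::comm_monoid_add"
  shows "(\<Sum>as\<in>Aset n 2. f (filter (\<lambda>j. as ! (j - 2) = 1) [2..<n + 1]) (filter (\<lambda>j. as ! (j - 2) = 2) [2..<n + 1]))
    = (\<Sum>I\<in>Pow {2..n}. f (sorted_list_of_set I) (sorted_list_of_set ({2..n} - I)))"
proof (rule sum.reindex_bij_witness[where i="\<lambda>I. map (\<lambda>j. if j \<in> I then 1 else 2) [2..<n+1]"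
      and j="\<lambda>as. {j\<in>{2..n}. as ! (j - 2) = 1}"])
  fix as assume as: "as \<in> Aset n 2"
  then have l: "length as = n - 1" unfolding Aset_def by auto
  have e: "as ! k = 1 \<or> as ! k = 2" if "k < n - 1" for k
  proof -
    have "as ! k \<in> set as" using that l by simp
    then have "as ! k \<in> {1..2}" using as unfolding Aset_def by auto
    then show ?thesis by auto
  qed
  show "map (\<lambda>j. if j \<in> {j\<in>{2..n}. as ! (j - 2) = 1} then 1 else 2) [2..<n+1] = as"
    by (rule nth_equalityI) (use l e in \<open>auto simp: nth_map simp del: upt_Suc\<close>)
  show "{j\<in>{2..n}. as ! (j - 2) = 1} \<in> Pow {2..n}" by auto
  have s1: "{j\<in>{2..<n+1}. as ! (j - 2) = 1} = {j\<in>{2..n}. as ! (j - 2) = 1}" by auto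
  have s2: "{j\<in>{2..<n+1}. as ! (j - 2) = 2} = {2..n} - {j\<in>{2..n}. as ! (j - 2) = 1}"
  proof -
    have "j \<in> {2..n} \<Longrightarrow> as ! (j - 2) = 1 \<or> as ! (j - 2) = 2" for j using e[of "j - 2"] by auto
    then show ?thesis by (auto; force)
  qed
  show "f (sorted_list_of_set {j\<in>{2..n}. as ! (j - 2) = 1}) (sorted_list_of_set ({2..n} - {j\<in>{2..n}. as ! (j - 2) = 1})) =
     f (filter (\<lambda>j. as ! (j - 2) = 1) [2..<n + 1]) (filter (\<lambda>j. as ! (j - 2) = 2) [2..<n + 1])"
    unfolding filt_sl s1 s2 ..
next
  fix I assume I: "I \<in> Pow {2..n}"
  show "{j\<in>{2..n}. map (\<lambda>j. if j \<in> I then 1 else 2) [2..<n+1] ! (j - 2) = (1::nat)} = I"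
  proof -
    have "map (\<lambda>j. if j \<in> I then 1 else 2) [2..<n+1] ! (j - 2) = (if j \<in> I then (1::nat) else 2)"
      if "j \<in> {2..n}" for j
    proof -
      have jj: "Suc (Suc (j - 2)) = j" using that by auto
      show ?thesis using that by (auto simp: nth_map jj simp del: upt_Suc)
    qed
    note H = this
    show ?thesis
    proof
      show "{j\<in>{2..n}. map (\<lambda>j. if j \<in> I then 1 else 2) [2..<n+1] ! (j - 2) = (1::nat)} \<subseteq> I"
      proof
        fix j assume j: "j \<in> {j\<in>{2..n}. map (\<lambda>j. if j \<in> I then 1 else 2) [2..<n+1] ! (j - 2) = (1::nat)}"
        then have jin: "j \<in> {2..n}" by blast
        from j have "map (\<lambda>j. if j \<in> I then 1 else 2) [2..<n+1] ! (j - 2) = (1::nat)" by blast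
        then have "(if j \<in> I then (1::nat) else 2) = 1" unfolding H[OF jin] .
        then show "j \<in> I" by (cases "j \<in> I") auto
      qed
      show "I \<subseteq> {j\<in>{2..n}. map (\<lambda>j. if j \<in> I then 1 else 2) [2..<n+1] ! (j - 2) = (1::nat)}"
      proof
        fix j assume j: "j \<in> I"
        then have jin: "j \<in> {2..n}" using I by blast
        have "map (\<lambda>j. if j \<in> I then 1 else 2) [2..<n+1] ! (j - 2) = (1::nat)"
          unfolding H[OF jin] using j by simp
        then show "j \<in> {j\<in>{2..n}. map (\<lambda>j. if j \<in> I then 1 else 2) [2..<n+1] ! (j - 2) = (1::nat)}"
          using jin by blast
      qed
    qed
  qed
  show "map (\<lambda>j. if j \<in> I then 1 else 2) [2..<n+1] \<in> Aset n 2"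
    unfolding Aset_def by auto
qed

theorem lemma2p18:
  fixes psihat yhat :: "nat \<Rightarrow> nat \<Rightarrow> 'a::field_char_0" and g n :: nat
  assumes "1 \<le> n"
    and "\<forall>a. psihat a 0 = 0"
    and "\<forall>a. yhat a 0 = 0"
  shows "\<forall>x. 2 * TT psihat yhat n (2 * int g - 2 + int n) 2 x =
           (if g = 0 then 0 else Wser psihat yhat (g - 1) (1 # 1 # [2..<n + 1]) False 0 0 x)
         + (\<Sum>g1\<le>g. \<Sum>I\<in>Pow {2..n}.
              sprod (Wser psihat yhat g1 (1 # sorted_list_of_set I) True)
                    (Wser psihat yhat (g - g1) (1 # sorted_list_of_set ({2..n} - I)) True) 0 0 x)"
proof
  fix x
  let ?H = "2 * int g - 2 + int n"
  have hh: "?H + 1 = 2 * int g + int (length [2..<n + 1])" using assms(1) by simp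
  have t1: "Sig psihat yhat n (1, replicate (n - 1) 1) (?H + 1) 2 x =
     (if g = 0 then 0 else 1/2 * Wser psihat yhat (g - 1) (1 # 1 # [2..<n + 1]) False 0 0 x)"
    unfolding Sig1 hh by (rule Tser_e2) (use assms(1) in auto)
  have t2: "(\<Sum>as\<in>Aset n 2. Sig psihat yhat n (2, as) (?H + 1) 2 x) =
     1/2 * (\<Sum>I\<in>Pow {2..n}. \<Sum>g1\<le>g. sprod (Wser psihat yhat g1 (1 # sorted_list_of_set I) True)
                    (Wser psihat yhat (g - g1) (1 # sorted_list_of_set ({2..n} - I)) True) 0 0 x)"
  proof -
    have "(\<Sum>as\<in>Aset n 2. Sig psihat yhat n (2, as) (?H + 1) 2 x) =
       1/2 * (\<Sum>as\<in>Aset n 2. (\<lambda>J1 J2. sprod (Tser psihat yhat n J1) (Tser psihat yhat n J2) (?H + 1) 2 x)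
          (filter (\<lambda>j. as ! (j - 2) = 1) [2..<n + 1]) (filter (\<lambda>j. as ! (j - 2) = 2) [2..<n + 1]))"
      unfolding Sig2 by (simp add: sum_distrib_left)
    also have "\<dots> = 1/2 * (\<Sum>I\<in>Pow {2..n}. sprod (Tser psihat yhat n (sorted_list_of_set I))
        (Tser psihat yhat n (sorted_list_of_set ({2..n} - I))) (?H + 1) 2 x)"
      using Aset_bij[where n=n and f="\<lambda>J1 J2. sprod (Tser psihat yhat n J1) (Tser psihat yhat n J2) (?H + 1) 2 x"] by simp
    also have "\<dots> = 1/2 * (\<Sum>I\<in>Pow {2..n}. \<Sum>g1\<le>g. sprod (Wser psihat yhat g1 (1 # sorted_list_of_set I) True)
                    (Wser psihat yhat (g - g1) (1 # sorted_list_of_set ({2..n} - I)) True) 0 0 x)"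
      by (rule arg_cong[where f="\<lambda>t. 1/2 * t"], rule sum.cong[OF refl], rule core_I) (use assms(1) in auto)
    finally show ?thesis .
  qed
  have "2 * TT psihat yhat n ?H 2 x = 2 * (Sig psihat yhat n (1, replicate (n - 1) 1) (?H + 1) 2 x
     + (\<Sum>as\<in>Aset n 2. Sig psihat yhat n (2, as) (?H + 1) 2 x))"
    unfolding TT_step1 SigS_e2 ..
  also have "\<dots> = (if g = 0 then 0 else Wser psihat yhat (g - 1) (1 # 1 # [2..<n + 1]) False 0 0 x)
     + (\<Sum>I\<in>Pow {2..n}. \<Sum>g1\<le>g. sprod (Wser psihat yhat g1 (1 # sorted_list_of_set I) True)
                    (Wser psihat yhat (g - g1) (1 # sorted_list_of_set ({2..n} - I)) True) 0 0 x)"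
    unfolding t1 t2 by (simp add: distrib_left)
  also have "(\<Sum>I\<in>Pow {2..n}. \<Sum>g1\<le>g. sprod (Wser psihat yhat g1 (1 # sorted_list_of_set I) True)
                    (Wser psihat yhat (g - g1) (1 # sorted_list_of_set ({2..n} - I)) True) 0 0 x)
     = (\<Sum>g1\<le>g. \<Sum>I\<in>Pow {2..n}. sprod (Wser psihat yhat g1 (1 # sorted_list_of_set I) True)
                    (Wser psihat yhat (g - g1) (1 # sorted_list_of_set ({2..n} - I)) True) 0 0 x)"
    by (rule sum.swap)
  finally show "2 * TT psihat yhat n ?H 2 x =
           (if g = 0 then 0 else Wser psihat yhat (g - 1) (1 # 1 # [2..<n + 1]) False 0 0 x)
         + (\<Sum>g1\<le>g. \<Sum>I\<in>Pow {2..n}.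
              sprod (Wser psihat yhat g1 (1 # sorted_list_of_set I) True)
                    (Wser psihat yhat (g - g1) (1 # sorted_list_of_set ({2..n} - I)) True) 0 0 x)" .
qed

end
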